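(* Let $F$ be a field of characteristic $0$, let $A$ be the free associative $F$-algebra without unity on free generators $x,y$, let $I$ be the two-sided ideal of $A$ generated by the following elements: (i) all monomials of degree $8$; (ii) all monomials of degree greater than $2$ in $x$; (iii) all monic monomials of degree $7$ except $yxy^3xy$ and $y^2xyxy^2$; (iv) all monic monomials of degree less than $7$ which do not divide either of the monomials $yxy^3xy$ and $y^2xyxy^2$; (v) the polynomial $2xy^3xy-5yxyxy^2-2yxy^3x+5y^2xyxy$; (vi) the polynomial $2yxy^3xy-5y^2xyxy^2$; let $B=A/I$ and let $L=[B]$. Then $L$ is a $5$-Engel Lie algebra such that the group $L^*$ is not $5$-Engel.
   Context: For monic monomials $m,n$ in $x,y$, $m$ divides $n$ if $n=m_1 m m_2$ for some monic monomials $m_1,m_2$ (possibly equal to $1$). $[B]$ is the Lie algebra on $B$ with bracket $[a,b]=ab-ba$; it is nilpotent since $B^8=0$. For a nilpotent Lie algebra $L$ over a field of characteristic $0$, $L^*$ denotes the group with underlying set $L$ and multiplication given by the Baker–Campbell–Hausdorff formula $u*v=\log(e^ue^v)=u+v+\tfrac12[u,v]+\cdots$. Set $[x,{}_{(1)}y]=[x,y]$, $[x,{}_{(k+1)}y]=[[x,{}_{(k)}y],y]$; a Lie algebra is $n$-Engel if $[u,{}_{(n)}v]=0$ for all $u,v$. For a group, $(x,y)=x^{-1}y^{-1}xy$, $(x,{}_{(k+1)}y)=((x,{}_{(k)}y),y)$; a group is $n$-Engel if $(u,{}_{(n)}v)=1$ for all $u,v$. *)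

theory Defs
  imports Main
begin

datatype gen = gx | gy

text \<open>Elements of A: finitely supported functions from words to F with zero
  coefficient at the empty word (no unity).\<close>

definition FA :: "(gen list \<Rightarrow> 'a::field) set" where
  "FA = {p. finite {w. p w \<noteq> 0} \<and> p [] = 0}"

definition pzero :: "gen list \<Rightarrow> 'a::field" where "pzero = (\<lambda>w. 0)"
definition padd :: "(gen list \<Rightarrow> 'a::field) \<Rightarrow> _ \<Rightarrow> _" where
  "padd p q = (\<lambda>w. p w + q w)"
definition psmul :: "'a::field \<Rightarrow> (gen list \<Rightarrow> 'a) \<Rightarrow> _" where
  "psmul c p = (\<lambda>w. c * p w)"
definition psub :: "(gen list \<Rightarrow> 'a::field) \<Rightarrow> _ \<Rightarrow> _" where
  "psub p q = (\<lambda>w. p w - q w)"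
definition pmul :: "(gen list \<Rightarrow> 'a::field) \<Rightarrow> _ \<Rightarrow> _" where
  "pmul p q = (\<lambda>w. \<Sum>i\<le>length w. p (take i w) * q (drop i w))"

definition mon :: "gen list \<Rightarrow> gen list \<Rightarrow> 'a::field" where
  "mon w = (\<lambda>v. if v = w then 1 else 0)"

definition divides :: "gen list \<Rightarrow> gen list \<Rightarrow> bool" where
  "divides m n \<longleftrightarrow> (\<exists>m1 m2. n = m1 @ m @ m2)"

definition w1 :: "gen list" where "w1 = [gy,gx,gy,gy,gy,gx,gy]"
definition w2 :: "gen list" where "w2 = [gy,gy,gx,gy,gx,gy,gy]"

definition rel5 :: "gen list \<Rightarrow> 'a::field" where
  "rel5 = padd (padd (psmul 2 (mon [gx,gy,gy,gy,gx,gy]))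
                     (psmul (-5) (mon [gy,gx,gy,gx,gy,gy])))
               (padd (psmul (-2) (mon [gy,gx,gy,gy,gy,gx]))
                     (psmul 5 (mon [gy,gy,gx,gy,gx,gy])))"

definition rel6 :: "gen list \<Rightarrow> 'a::field" where
  "rel6 = padd (psmul 2 (mon w1)) (psmul (-5) (mon w2))"

definition Igens :: "(gen list \<Rightarrow> 'a::field) set" where
  "Igens =
     {mon w | w. length w = 8}
   \<union> {mon w | w. w \<noteq> [] \<and> count_list w gx > 2}
   \<union> {mon w | w. length w = 7 \<and> w \<noteq> w1 \<and> w \<noteq> w2}
   \<union> {mon w | w. w \<noteq> [] \<and> length w < 7 \<and> \<not> divides w w1 \<and> \<not> divides w w2}
   \<union> {rel5, rel6}"

definition is_ideal :: "(gen list \<Rightarrow> 'a::field) set \<Rightarrow> bool" where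
  "is_ideal J \<longleftrightarrow> J \<subseteq> FA \<and> pzero \<in> J \<and>
     (\<forall>p\<in>J. \<forall>q\<in>J. padd p q \<in> J) \<and> (\<forall>c. \<forall>p\<in>J. psmul c p \<in> J) \<and>
     (\<forall>a\<in>FA. \<forall>p\<in>J. pmul a p \<in> J \<and> pmul p a \<in> J)"

definition Iid :: "(gen list \<Rightarrow> 'a::field) set" where
  "Iid = \<Inter>{J. is_ideal J \<and> Igens \<subseteq> J}"

definition cls :: "(gen list \<Rightarrow> 'a::field) \<Rightarrow> (gen list \<Rightarrow> 'a) set" where
  "cls p = {q \<in> FA. psub p q \<in> Iid}"

definition Bset :: "(gen list \<Rightarrow> 'a::field) set set" where
  "Bset = cls ` FA"

definition rep :: "(gen list \<Rightarrow> 'a::field) set \<Rightarrow> gen list \<Rightarrow> 'a" where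
  "rep X = (SOME p. p \<in> X)"

definition zeroB :: "(gen list \<Rightarrow> 'a::field) set" where "zeroB = cls pzero"
definition addB :: "(gen list \<Rightarrow> 'a::field) set \<Rightarrow> _ \<Rightarrow> _" where
  "addB X Y = cls (padd (rep X) (rep Y))"
definition subB :: "(gen list \<Rightarrow> 'a::field) set \<Rightarrow> _ \<Rightarrow> _" where
  "subB X Y = cls (psub (rep X) (rep Y))"
definition negB :: "(gen list \<Rightarrow> 'a::field) set \<Rightarrow> _" where
  "negB X = cls (psmul (-1) (rep X))"
definition smulB :: "'a::field \<Rightarrow> (gen list \<Rightarrow> 'a) set \<Rightarrow> _" where
  "smulB c X = cls (psmul c (rep X))"
definition mulB :: "(gen list \<Rightarrow> 'a::field) set \<Rightarrow> _ \<Rightarrow> _" where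
  "mulB X Y = cls (pmul (rep X) (rep Y))"

text \<open>Positive powers (bpow X 0 is just a dummy value, never used below).\<close>
fun bpow :: "(gen list \<Rightarrow> 'a::field) set \<Rightarrow> nat \<Rightarrow> (gen list \<Rightarrow> 'a) set" where
  "bpow X 0 = zeroB"
| "bpow X (Suc 0) = X"
| "bpow X (Suc (Suc n)) = mulB (bpow X (Suc n)) X"

definition sumB :: "(gen list \<Rightarrow> 'a::field) set list \<Rightarrow> (gen list \<Rightarrow> 'a) set" where
  "sumB xs = foldr addB xs zeroB"

definition nilidx :: "(gen list \<Rightarrow> 'a::field) set \<Rightarrow> nat" where
  "nilidx X = (LEAST n. n \<ge> 1 \<and> bpow X n = zeroB)"

definition nilsum :: "(nat \<Rightarrow> 'a::field) \<Rightarrow> (gen list \<Rightarrow> 'a) set \<Rightarrow> (gen list \<Rightarrow> 'a) set" where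
  "nilsum c X = sumB (map (\<lambda>k. smulB (c k) (bpow X k)) [1..<nilidx X])"

definition expm1B :: "(gen list \<Rightarrow> 'a::field_char_0) set \<Rightarrow> _" where
  "expm1B X = nilsum (\<lambda>k. 1 / fact k) X"
definition log1pB :: "(gen list \<Rightarrow> 'a::field_char_0) set \<Rightarrow> _" where
  "log1pB X = nilsum (\<lambda>k. (-1) ^ (k + 1) / of_nat k) X"

text \<open>Baker-Campbell-Hausdorff product u*v = log(e^u e^v), where
  e^u e^v = 1 + (E u + E v + E u E v) with E u = e^u - 1.\<close>
definition bch :: "(gen list \<Rightarrow> 'a::field_char_0) set \<Rightarrow> _ \<Rightarrow> _" where
  "bch u v = log1pB (addB (addB (expm1B u) (expm1B v)) (mulB (expm1B u) (expm1B v)))"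

text \<open>Group commutator (u,v) = u^-1 v^-1 u v in L^*; inverse of u in L^* is -u.\<close>
definition gcomm :: "(gen list \<Rightarrow> 'a::field_char_0) set \<Rightarrow> _ \<Rightarrow> _" where
  "gcomm u v = bch (bch (bch (negB u) (negB v)) u) v"

primrec giter :: "(gen list \<Rightarrow> 'a::field_char_0) set \<Rightarrow> _ \<Rightarrow> nat \<Rightarrow> _" where
  "giter u v 0 = u"
| "giter u v (Suc k) = gcomm (giter u v k) v"

definition lbr :: "(gen list \<Rightarrow> 'a::field_char_0) set \<Rightarrow> _ \<Rightarrow> _" where
  "lbr u v = subB (mulB u v) (mulB v u)"

primrec liter :: "(gen list \<Rightarrow> 'a::field_char_0) set \<Rightarrow> _ \<Rightarrow> nat \<Rightarrow> _" where
  "liter u v 0 = u"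
| "liter u v (Suc k) = lbr (liter u v k) v"

end

theory Submission imports Defs "HOL-Library.Sublist" begin
datatype 'a V = V 'a 'a 'a 'a 'a 'a 'a 'a 'a 'a 'a 'a 'a 'a 'a 'a 'a 'a 'a 'a 'a 'a 'a 'a 'a 'a

fun mulV :: "'a::comm_ring_1 V \<Rightarrow> 'a V \<Rightarrow> 'a V" where
  "mulV (V a1 a2 a3 a4 a5 a6 a7 a8 a9 a10 a11 a12 a13 a14 a15 a16 a17 a18 a19 a20 a21 a22 a23 a24 a25 a26) (V b1 b2 b3 b4 b5 b6 b7 b8 b9 b10 b11 b12 b13 b14 b15 b16 b17 b18 b19 b20 b21 b22 b23 b24 b25 b26) = V (0) (0) (a1 * b2) (a2 * b1) (a2 * b2) (a1 * b4 + a3 * b1) (a1 * b5 + a3 * b2) (a2 * b3 + a4 * b2) (a2 * b4 + a5 * b1) (a2 * b5 + a5 * b2) (a1 * b8 + a3 * b3 + a6 * b2) (a1 * b10 + a3 * b5 + a7 * b2) (a2 * b6 + a4 * b4 + a8 * b1) (a2 * b7 + a4 * b5 + a8 * b2) (a2 * b8 + a5 * b3 + a9 * b2) (a2 * b9 + a5 * b4 + a10 * b1) (a1 * b14 + a3 * b7 + a6 * b5 + a11 * b2) (a1 * b16 + a3 * b9 + a7 * b4 + a12 * b1) (a2 * b11 + a4 * b8 + a8 * b3 + a13 * b2) (a2 * b12 + a4 * b10 + a8 * b5 + a14 * b2) (a2 * b13 + a5 * b6 + a9 * b4 + a15 * b1) (a2 * b15 + a5 * b8 + a10 * b3 + a16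 * b2) (5 * (a1 * b22) + 5 * (a3 * b15) + 5 * (a7 * b8) + 5 * (a12 * b3) + 5 * (a18 * b2) - (2 * (a2 * b19)) - (2 * (a5 * b11)) - (2 * (a9 * b8)) - (2 * (a15 * b3)) - (2 * (a21 * b2))) (a2 * b17 + a4 * b14 + a8 * b7 + a13 * b5 + a19 * b2 + a2 * b19 + a5 * b11 + a9 * b8 + a15 * b3 + a21 * b2) (5 * (a2 * b18) + 5 * (a4 * b16) + 5 * (a8 * b9) + 5 * (a14 * b4) + 5 * (a20 * b1) + 2 * (a2 * b19) + 2 * (a5 * b11) + 2 * (a9 * b8) + 2 * (a15 * b3) + 2 * (a21 * b2)) (5 * (a4 * b22) + 5 * (a8 * b15) + 5 * (a14 * b8) + 5 * (a20 * b3) + 2 * (a5 * b17) + 2 * (a9 * b14) + 2 * (a15 * b7) + 2 * (a21 * b5) + a2 * b23 + 2 * (a2 * b24) + a25 * b2)"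

fun addV :: "'a::comm_ring_1 V \<Rightarrow> 'a V \<Rightarrow> 'a V" where
  "addV (V a1 a2 a3 a4 a5 a6 a7 a8 a9 a10 a11 a12 a13 a14 a15 a16 a17 a18 a19 a20 a21 a22 a23 a24 a25 a26) (V b1 b2 b3 b4 b5 b6 b7 b8 b9 b10 b11 b12 b13 b14 b15 b16 b17 b18 b19 b20 b21 b22 b23 b24 b25 b26) = V (a1 + b1) (a2 + b2) (a3 + b3) (a4 + b4) (a5 + b5) (a6 + b6) (a7 + b7) (a8 + b8) (a9 + b9) (a10 + b10) (a11 + b11) (a12 + b12) (a13 + b13) (a14 + b14) (a15 + b15) (a16 + b16) (a17 + b17) (a18 + b18) (a19 + b19) (a20 + b20) (a21 + b21) (a22 + b22) (a23 + b23) (a24 + b24) (a25 + b25) (a26 + b26)"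

fun subV :: "'a::comm_ring_1 V \<Rightarrow> 'a V \<Rightarrow> 'a V" where
  "subV (V a1 a2 a3 a4 a5 a6 a7 a8 a9 a10 a11 a12 a13 a14 a15 a16 a17 a18 a19 a20 a21 a22 a23 a24 a25 a26) (V b1 b2 b3 b4 b5 b6 b7 b8 b9 b10 b11 b12 b13 b14 b15 b16 b17 b18 b19 b20 b21 b22 b23 b24 b25 b26) = V (a1 - b1) (a2 - b2) (a3 - b3) (a4 - b4) (a5 - b5) (a6 - b6) (a7 - b7) (a8 - b8) (a9 - b9) (a10 - b10) (a11 - b11) (a12 - b12) (a13 - b13) (a14 - b14) (a15 - b15) (a16 - b16) (a17 - b17) (a18 - b18) (a19 - b19) (a20 - b20) (a21 - b21) (a22 - b22) (a23 - b23) (a24 - b24) (a25 - b25) (a26 - b26)"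

fun smulV :: "'a::comm_ring_1 \<Rightarrow> 'a V \<Rightarrow> 'a V" where
  "smulV c (V a1 a2 a3 a4 a5 a6 a7 a8 a9 a10 a11 a12 a13 a14 a15 a16 a17 a18 a19 a20 a21 a22 a23 a24 a25 a26) = V (c * a1) (c * a2) (c * a3) (c * a4) (c * a5) (c * a6) (c * a7) (c * a8) (c * a9) (c * a10) (c * a11) (c * a12) (c * a13) (c * a14) (c * a15) (c * a16) (c * a17) (c * a18) (c * a19) (c * a20) (c * a21) (c * a22) (c * a23) (c * a24) (c * a25) (c * a26)"

definition zeroV :: "'a::comm_ring_1 V" where
  "zeroV = V 0 0 0 0 0 0 0 0 0 0 0 0 0 0 0 0 0 0 0 0 0 0 0 0 0 0"

definition crd :: "(gen list \<Rightarrow> 'a::field) \<Rightarrow> 'a V" where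
  "crd p = V (p [gx]) (p [gy]) (p [gx,gy]) (p [gy,gx]) (p [gy,gy]) (p [gx,gy,gx]) (p [gx,gy,gy]) (p [gy,gx,gy]) (p [gy,gy,gx]) (p [gy,gy,gy]) (p [gx,gy,gx,gy]) (p [gx,gy,gy,gy]) (p [gy,gx,gy,gx]) (p [gy,gx,gy,gy]) (p [gy,gy,gx,gy]) (p [gy,gy,gy,gx]) (p [gx,gy,gx,gy,gy]) (p [gx,gy,gy,gy,gx]) (p [gy,gx,gy,gx,gy]) (p [gy,gx,gy,gy,gy]) (p [gy,gy,gx,gy,gx]) (p [gy,gy,gy,gx,gy]) (5 * p [gx,gy,gy,gy,gx,gy] - 2 * p [gy,gy,gx,gy,gx,gy]) (p [gy,gx,gy,gx,gy,gy] + p [gy,gy,gx,gy,gx,gy]) (5 * p [gy,gx,gy,gy,gy,gx] + 2 * p [gy,gy,gx,gy,gx,gy]) (5 * p [gy,gx,gy,gy,gy,gx,gy] + 2 * p [gy,gy,gx,gy,gx,gy,gy])"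

definition subs28 :: "gen list list" where
  "subs28 = [[gx], [gy], [gx,gy], [gy,gx], [gy,gy], [gx,gy,gx], [gx,gy,gy], [gy,gx,gy], [gy,gy,gx], [gy,gy,gy], [gx,gy,gx,gy], [gx,gy,gy,gy], [gy,gx,gy,gx], [gy,gx,gy,gy], [gy,gy,gx,gy], [gy,gy,gy,gx], [gx,gy,gx,gy,gy], [gx,gy,gy,gy,gx], [gy,gx,gy,gx,gy], [gy,gx,gy,gy,gy], [gy,gy,gx,gy,gx], [gy,gy,gy,gx,gy], [gx,gy,gy,gy,gx,gy], [gy,gx,gy,gx,gy,gy], [gy,gx,gy,gy,gy,gx], [gy,gy,gx,gy,gx,gy], [gy,gx,gy,gy,gy,gx,gy], [gy,gy,gx,gy,gx,gy,gy]]"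

lemma pmul_Nil[simp]: "pmul p q [] = p [] * q []"
  by (simp add: pmul_def)

lemma pmul_Cons[simp]: "pmul p q (a # w) = p [] * q (a # w) + pmul (\<lambda>u. p (a # u)) q w"
  unfolding pmul_def by (simp add: sum.atMost_Suc_shift del: sum.atMost_Suc)

lemma crd_pmul:
  assumes "p [] = 0" "q [] = 0"
  shows "crd (pmul p q) = mulV (crd p) (crd q)"
  using assms by (simp add: crd_def algebra_simps)

lemma crd_padd: "crd (padd p q) = addV (crd p) (crd q)"
  by (simp add: crd_def padd_def algebra_simps)
lemma crd_psub: "crd (psub p q) = subV (crd p) (crd q)"
  by (simp add: crd_def psub_def algebra_simps)
lemma crd_psmul: "crd (psmul c p) = smulV c (crd p)"
  by (simp add: crd_def psmul_def algebra_simps)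
lemma crd_pzero: "crd pzero = zeroV"
  by (simp add: crd_def pzero_def zeroV_def)

lemma mulV_zero1[simp]: "mulV zeroV a = zeroV" by (cases a) (simp add: zeroV_def)
lemma mulV_zero2[simp]: "mulV a zeroV = zeroV" by (cases a) (simp add: zeroV_def)
lemma addV_zero[simp]: "addV zeroV zeroV = zeroV" by (simp add: zeroV_def)
lemma smulV_zero[simp]: "smulV c zeroV = zeroV" by (simp add: zeroV_def)
lemma subV_eq0: "subV a b = zeroV \<longleftrightarrow> a = b"
  by (cases a; cases b) (simp add: zeroV_def)

lemma FA_pzero: "pzero \<in> FA" by (simp add: FA_def pzero_def)

lemma FA_padd: "p \<in> FA \<Longrightarrow> q \<in> FA \<Longrightarrow> padd p q \<in> FA"
  unfolding FA_def padd_def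
  by (auto intro: finite_subset[of _ "{w. p w \<noteq> 0} \<union> {w. q w \<noteq> 0}"])

lemma FA_psub: "p \<in> FA \<Longrightarrow> q \<in> FA \<Longrightarrow> psub p q \<in> FA"
  unfolding FA_def psub_def
  by (auto intro: finite_subset[of _ "{w. p w \<noteq> 0} \<union> {w. q w \<noteq> 0}"])

lemma FA_psmul: "p \<in> FA \<Longrightarrow> psmul c p \<in> FA"
  unfolding FA_def psmul_def
  by (auto intro: finite_subset[of _ "{w. p w \<noteq> 0}"])

lemma FA_mon: "w \<noteq> [] \<Longrightarrow> mon w \<in> FA"
  unfolding FA_def mon_def by auto

lemma FA_pmul:
  assumes "p \<in> FA" "q \<in> FA"
  shows "pmul p q \<in> FA"
proof -
  have fp: "finite {w. p w \<noteq> 0}" and fq: "finite {w. q w \<noteq> 0}" and p0: "p [] = 0"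
    using assms by (auto simp: FA_def)
  have "{w. pmul p q w \<noteq> 0} \<subseteq> (\<lambda>(u,v). u @ v) ` ({w. p w \<noteq> 0} \<times> {w. q w \<noteq> 0})"
  proof
    fix w assume "w \<in> {w. pmul p q w \<noteq> 0}"
    then have "(\<Sum>i\<le>length w. p (take i w) * q (drop i w)) \<noteq> 0" by (simp add: pmul_def)
    then obtain i where "p (take i w) * q (drop i w) \<noteq> 0"
      by (meson sum.not_neutral_contains_not_neutral)
    then have "(take i w, drop i w) \<in> {w. p w \<noteq> 0} \<times> {w. q w \<noteq> 0}" by auto
    then show "w \<in> (\<lambda>(u,v). u @ v) ` ({w. p w \<noteq> 0} \<times> {w. q w \<noteq> 0})"
      by (metis (no_types, lifting) append_take_drop_id case_prod_conv image_eqI)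
  qed
  then have "finite {w. pmul p q w \<noteq> 0}"
    using fp fq by (meson finite_SigmaI finite_imageI finite_subset)
  then show ?thesis using p0 by (simp add: FA_def)
qed

lemma crd_mon: "\<forall>s\<in>set subs28. s \<noteq> w \<Longrightarrow> crd (mon w) = zeroV"
  by (simp add: crd_def mon_def zeroV_def subs28_def)

definition J0 :: "(gen list \<Rightarrow> 'a::field) set" where
  "J0 = {p \<in> FA. crd p = zeroV}"

lemma FA_nil: "p \<in> FA \<Longrightarrow> p [] = 0" by (simp add: FA_def)

lemma J0_ideal: "is_ideal J0"
  unfolding is_ideal_def J0_def
  by (auto simp: FA_pzero crd_pzero FA_padd crd_padd FA_psmul crd_psmul FA_pmul crd_pmul FA_nil)

lemma divides_sublist: "divides m n \<longleftrightarrow> sublist m n"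
  by (auto simp: divides_def sublist_def)

lemma subs_len: "\<forall>s\<in>set subs28. length s \<le> 7" by (simp add: subs28_def)
lemma subs_cnt: "\<forall>s\<in>set subs28. count_list s gx \<le> 2" by (simp add: subs28_def)
lemma subs_7: "\<forall>s\<in>set subs28. length s = 7 \<longrightarrow> s = w1 \<or> s = w2" by (simp add: subs28_def w1_def w2_def)
lemma subs_div: "\<forall>s\<in>set subs28. divides s w1 \<or> divides s w2"
  by (simp add: subs28_def w1_def w2_def divides_sublist sublist_Cons_right)
lemma div_subs: "divides s w1 \<or> divides s w2 \<Longrightarrow> s = [] \<or> s \<in> set subs28"
proof -
  assume "divides s w1 \<or> divides s w2"
  then have "s \<in> set (sublists w1) \<or> s \<in> set (sublists w2)" by (simp add: divides_sublist)
  moreover have "set (sublists w1) \<subseteq> insert [] (set subs28)"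
    by (simp add: subs28_def w1_def)
  moreover have "set (sublists w2) \<subseteq> insert [] (set subs28)"
    by (simp add: subs28_def w2_def)
  ultimately show ?thesis by blast
qed

lemma FA_rel5: "rel5 \<in> FA"
  unfolding rel5_def by (intro FA_padd FA_psmul FA_mon) auto
lemma FA_rel6: "rel6 \<in> FA"
  unfolding rel6_def w1_def w2_def by (intro FA_padd FA_psmul FA_mon) auto
lemma crd_rel5: "crd rel5 = zeroV"
  by (simp add: rel5_def crd_def padd_def psmul_def mon_def zeroV_def)
lemma crd_rel6: "crd rel6 = zeroV"
  by (simp add: rel6_def w1_def w2_def crd_def padd_def psmul_def mon_def zeroV_def)

lemma Igens_J0: "Igens \<subseteq> J0"
proof
  fix g :: "gen list \<Rightarrow> 'a" assume g: "g \<in> Igens"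
  have monJ: "mon w \<in> J0" if "w \<noteq> []" "\<forall>s\<in>set subs28. s \<noteq> w" for w :: "gen list"
    using that by (simp add: J0_def FA_mon crd_mon)
  show "g \<in> J0"
    using g unfolding Igens_def
  proof (elim UnE)
    assume "g \<in> {mon w |w. length w = 8}"
    then obtain w where "g = mon w" "length w = 8" by auto
    then show ?thesis using monJ[of w] subs_len by fastforce
  next
    assume "g \<in> {mon w |w. w \<noteq> [] \<and> 2 < count_list w gx}"
    then obtain w where "g = mon w" "w \<noteq> []" "2 < count_list w gx" by auto
    then show ?thesis using monJ[of w] subs_cnt by fastforce
  next
    assume "g \<in> {mon w |w. length w = 7 \<and> w \<noteq> w1 \<and> w \<noteq> w2}"
    then obtain w where "g = mon w" "length w = 7" "w \<noteq> w1" "w \<noteq> w2" by auto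
    then show ?thesis using monJ[of w] subs_7 by fastforce
  next
    assume "g \<in> {mon w |w. w \<noteq> [] \<and> length w < 7 \<and> \<not> divides w w1 \<and> \<not> divides w w2}"
    then obtain w where "g = mon w" "w \<noteq> []" "\<not> divides w w1" "\<not> divides w w2" by auto
    then show ?thesis using monJ[of w] subs_div by fastforce
  next
    assume "g \<in> {rel5, rel6}"
    then show ?thesis using FA_rel5 FA_rel6 crd_rel5 crd_rel6 by (auto simp: J0_def)
  qed
qed

lemma Iid_sub: "Iid \<subseteq> J0"
  unfolding Iid_def by (rule Inter_lower) (simp add: J0_ideal Igens_J0)

lemma pmul_mon: "pmul (mon a) (mon b) w = mon (a @ b) w"
proof (induction a arbitrary: w)
  case Nil
  show ?case
  proof (induction w)
    case Nil then show ?case by (simp add: mon_def)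
  next
    case (Cons c w)
    have "pmul (\<lambda>u. mon [] (c # u)) (mon b) w = 0"
      by (simp add: mon_def pmul_def)
    then show ?case by (simp add: mon_def)
  qed
next
  case (Cons c' a)
  show ?case
  proof (cases w)
    case Nil then show ?thesis by (simp add: mon_def)
  next
    case (Cons c w')
    have e: "(\<lambda>u. mon (c' # a) (c # u)) = (if c = c' then mon a else (\<lambda>_. 0))"
      by (auto simp: mon_def)
    have z: "pmul (\<lambda>_. 0) q v = 0" for q and v :: "gen list"
      by (simp add: pmul_def)
    show ?thesis using Cons.IH
      by (simp add: Cons e z) (auto simp: mon_def)
  qed
qed

lemma Ig1: "length w = 8 \<Longrightarrow> mon w \<in> Igens" unfolding Igens_def by blast
lemma Ig3: "length w = 7 \<Longrightarrow> w \<noteq> w1 \<Longrightarrow> w \<noteq> w2 \<Longrightarrow> mon w \<in> Igens"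
  unfolding Igens_def by blast
lemma Ig4: "w \<noteq> [] \<Longrightarrow> length w < 7 \<Longrightarrow> \<not> divides w w1 \<Longrightarrow> \<not> divides w w2 \<Longrightarrow> mon w \<in> Igens"
  unfolding Igens_def by blast
lemma Ig5: "rel5 \<in> Igens" unfolding Igens_def by blast
lemma Ig6: "rel6 \<in> Igens" unfolding Igens_def by blast

lemma mon_in_J:
  fixes J :: "(gen list \<Rightarrow> 'a::field) set"
  assumes J: "is_ideal J" "Igens \<subseteq> J" and w: "w \<noteq> []" "w \<notin> set subs28"
  shows "mon w \<in> J"
proof (cases "length w \<ge> 8")
  case True
  have "length (take 8 w) = 8" using True by simp
  then have m8: "mon (take 8 w) \<in> J"
    using J(2) Ig1 by blast
  show ?thesis
  proof (cases "drop 8 w = []")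
    case True
    then have "take 8 w = w" by simp
    then show ?thesis using m8 by simp
  next
    case False
    have "pmul (mon (take 8 w)) (mon (drop 8 w)) \<in> J"
      using J(1) m8 FA_mon[OF False] unfolding is_ideal_def by blast
    moreover have "pmul (mon (take 8 w)) (mon (drop 8 w)) = (mon w :: gen list \<Rightarrow> 'a)"
      by (rule ext) (simp add: pmul_mon)
    ultimately show ?thesis by (simp only:)
  qed
next
  case False
  show ?thesis
  proof (cases "length w = 7")
    case True
    have "w \<noteq> w1" "w \<noteq> w2" using w(2) by (auto simp: subs28_def w1_def w2_def)
    then show ?thesis using J(2) True Ig3 by blast
  next
    case False2: False
    have "\<not> divides w w1" "\<not> divides w w2" using div_subs w by auto
    moreover have "length w < 7" using False False2 by simp
    ultimately show ?thesis using J(2) w(1) Ig4 by blast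
  qed
qed

lemma fin_in_J:
  assumes J: "is_ideal J" "Igens \<subseteq> J" and S: "finite S"
  shows "\<forall>p. p [] = 0 \<longrightarrow> {w. p w \<noteq> 0} \<subseteq> S \<longrightarrow> (\<forall>s\<in>set subs28. p s = 0) \<longrightarrow> p \<in> J"
  using S
proof (induction S rule: finite_induct)
  case empty
  show ?case
  proof (intro allI impI)
    fix p :: "gen list \<Rightarrow> 'a" assume "{w. p w \<noteq> 0} \<subseteq> {}"
    then have "p = pzero" by (auto simp: pzero_def)
    then show "p \<in> J" using J(1) by (simp add: is_ideal_def)
  qed
next
  case (insert a S)
  show ?case
  proof (intro allI impI)
    fix p :: "gen list \<Rightarrow> 'a"
    assume p0: "p [] = 0" and sp: "{w. p w \<noteq> 0} \<subseteq> insert a S" and ps: "\<forall>s\<in>set subs28. p s = 0"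
    let ?q = "p(a := 0)"
    have IH: "\<And>q. q [] = 0 \<Longrightarrow> {w. q w \<noteq> 0} \<subseteq> S \<Longrightarrow> (\<forall>s\<in>set subs28. q s = 0) \<Longrightarrow> q \<in> J"
      using insert.IH by blast
    have q1: "?q [] = 0" using p0 by simp
    have q2: "{w. ?q w \<noteq> 0} \<subseteq> S" using sp by auto
    have q3: "\<forall>s\<in>set subs28. ?q s = 0" using ps by simp
    have qJ: "?q \<in> J" by (rule IH[OF q1 q2 q3])
    show "p \<in> J"
    proof (cases "p a = 0")
      case True
      then have "?q = p" by auto
      then show ?thesis using qJ by simp
    next
      case False
      then have "a \<noteq> []" "a \<notin> set subs28" using p0 ps by auto
      then have "mon a \<in> J" using mon_in_J J by blast
      then have "psmul (p a) (mon a) \<in> J" using J(1) by (simp add: is_ideal_def)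
      then have "padd (psmul (p a) (mon a)) ?q \<in> J" using qJ J(1) by (simp add: is_ideal_def)
      moreover have "padd (psmul (p a) (mon a)) ?q = p"
        by (rule ext) (simp add: padd_def psmul_def mon_def)
      ultimately show ?thesis by simp
    qed
  qed
qed

lemma solve5:
  fixes x c :: "'a::field_char_0"
  assumes "5 * x + c = 0" shows "x = - c / 5"
proof -
  have "x = (5 * x + c - c) / 5" by simp
  also have "\<dots> = - c / 5" using assms by simp
  finally show ?thesis .
qed

lemma J0_in_J:
  fixes p :: "gen list \<Rightarrow> 'a::field_char_0"
  assumes J: "is_ideal J" "Igens \<subseteq> J" and p: "p \<in> J0"
  shows "p \<in> J"
proof -
  have pFA: "p \<in> FA" and cp: "crd p = zeroV" using p by (auto simp: J0_def)
  have z: "\<forall>s\<in>set (take 22 subs28). p s = 0"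
    using cp by (simp add: crd_def zeroV_def subs28_def)
  have e1: "5 * p [gx,gy,gy,gy,gx,gy] + (- 2 * p [gy,gy,gx,gy,gx,gy]) = 0"
    using cp by (simp add: crd_def zeroV_def)
  have e2': "p [gy,gx,gy,gx,gy,gy] + p [gy,gy,gx,gy,gx,gy] = 0"
    using cp by (simp add: crd_def zeroV_def)
  have e2: "5 * p [gy,gx,gy,gx,gy,gy] + 5 * p [gy,gy,gx,gy,gx,gy] = 0"
    using e2' by (metis distrib_left mult_zero_right)
  have e3: "5 * p [gy,gx,gy,gy,gy,gx] + 2 * p [gy,gy,gx,gy,gx,gy] = 0"
    using cp by (simp add: crd_def zeroV_def)
  have e4: "5 * p [gy,gx,gy,gy,gy,gx,gy] + 2 * p [gy,gy,gx,gy,gx,gy,gy] = 0"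
    using cp by (simp add: crd_def zeroV_def)
  define a where "a = p [gy,gy,gx,gy,gx,gy]"
  define b where "b = p [gy,gy,gx,gy,gx,gy,gy]"
  define p' where "p' = padd (padd (psmul 5 p) (psmul (- a) rel5)) (psmul b rel6)"
  have r5: "rel5 \<in> J" and r6: "rel6 \<in> J" using J(2) Ig5 Ig6 by auto
  have p'FA: "p' \<in> FA" unfolding p'_def
    using pFA FA_rel5 FA_rel6 by (intro FA_padd FA_psmul)
  have p'v: "p' s = 5 * p s - a * rel5 s + b * rel6 s" for s
    by (simp add: p'_def padd_def psmul_def)
  have r5v: "(rel5 :: gen list \<Rightarrow> 'a) s = (if s = [gx,gy,gy,gy,gx,gy] then 2 else if s = [gy,gx,gy,gx,gy,gy] then -5
     else if s = [gy,gx,gy,gy,gy,gx] then -2 else if s = [gy,gy,gx,gy,gx,gy] then 5 else 0)" for s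
    by (simp add: rel5_def padd_def psmul_def mon_def)
  have r6v: "(rel6 :: gen list \<Rightarrow> 'a) s = (if s = [gy,gx,gy,gy,gy,gx,gy] then 2 else if s = [gy,gy,gx,gy,gx,gy,gy] then -5 else 0)" for s
    by (simp add: rel6_def w1_def w2_def padd_def psmul_def mon_def)
  have vals22: "\<forall>s\<in>set (take 22 subs28). p' s = 0"
    using z by (simp add: subs28_def p'v r5v r6v)
  have v1: "p' [gx,gy,gy,gy,gx,gy] = 0" using e1 by (simp add: p'v r5v r6v a_def algebra_simps)
  have v2: "p' [gy,gx,gy,gx,gy,gy] = 0" using e2 by (simp add: p'v r5v r6v a_def algebra_simps)
  have v3: "p' [gy,gx,gy,gy,gy,gx] = 0" using e3 by (simp add: p'v r5v r6v a_def algebra_simps)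
  have v4: "p' [gy,gy,gx,gy,gx,gy] = 0" by (simp add: p'v r5v r6v a_def)
  have v5: "p' [gy,gx,gy,gy,gy,gx,gy] = 0" using e4 by (simp add: p'v r5v r6v b_def algebra_simps)
  have v6: "p' [gy,gy,gx,gy,gx,gy,gy] = 0" by (simp add: p'v r5v r6v b_def)
  have "subs28 = take 22 subs28 @ [[gx,gy,gy,gy,gx,gy], [gy,gx,gy,gx,gy,gy], [gy,gx,gy,gy,gy,gx],
      [gy,gy,gx,gy,gx,gy], [gy,gx,gy,gy,gy,gx,gy], [gy,gy,gx,gy,gx,gy,gy]]"
    by (simp add: subs28_def)
  then have "set subs28 = set (take 22 subs28) \<union> {[gx,gy,gy,gy,gx,gy], [gy,gx,gy,gx,gy,gy], [gy,gx,gy,gy,gy,gx],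
      [gy,gy,gx,gy,gx,gy], [gy,gx,gy,gy,gy,gx,gy], [gy,gy,gx,gy,gx,gy,gy]}"
    by (metis set_append list.set(1) list.set(2) Un_insert_right sup_bot.right_neutral)
  then have vals: "\<forall>s\<in>set subs28. p' s = 0"
    using vals22 v1 v2 v3 v4 v5 v6 by auto
  have p'J: "p' \<in> J"
    using fin_in_J[OF J, of "{w. p' w \<noteq> 0}"] p'FA vals by (auto simp: FA_def)
  have "p = psmul (1/5) (padd (padd p' (psmul a rel5)) (psmul (- b) rel6))"
    by (rule ext) (simp add: p'_def padd_def psmul_def)
  moreover have "psmul (1/5) (padd (padd p' (psmul a rel5)) (psmul (- b) rel6)) \<in> J"
    using J(1) p'J r5 r6 by (simp add: is_ideal_def)
  ultimately show ?thesis by (simp only:)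
qed

lemma Iid_eq: "(Iid :: (gen list \<Rightarrow> 'a::field_char_0) set) = J0"
  apply (rule equalityI)
   apply (rule Iid_sub)
  apply (rule subsetI)
  unfolding Iid_def
  apply (rule InterI)
  using J0_in_J by blast


definition lbrV :: "'a::comm_ring_1 V \<Rightarrow> 'a V \<Rightarrow> 'a V" where
  "lbrV a b = subV (mulV a b) (mulV b a)"

primrec literV :: "'a::comm_ring_1 V \<Rightarrow> 'a V \<Rightarrow> nat \<Rightarrow> 'a V" where
  "literV u v 0 = u"
| "literV u v (Suc k) = lbrV (literV u v k) v"

lemma engelV: "literV (V a1 a2 a3 a4 a5 a6 a7 a8 a9 a10 a11 a12 a13 a14 a15 a16 a17 a18 a19 a20 a21 a22 a23 a24 a25 a26) (V b1 b2 b3 b4 b5 b6 b7 b8 b9 b10 b11 b12 b13 b14 b15 b16 b17 b18 b19 b20 b21 b22 b23 b24 b25 b26 :: 'a::comm_ring_1 V) 5 = zeroV"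
  apply (simp add: zeroV_def lbrV_def numeral_eq_Suc)
  apply (simp add: algebra_simps)
  done


fun powV :: "'a::comm_ring_1 V \<Rightarrow> nat \<Rightarrow> 'a V" where
  "powV c 0 = zeroV"
| "powV c (Suc 0) = c"
| "powV c (Suc (Suc n)) = mulV (powV c (Suc n)) c"

definition sumV :: "'a::comm_ring_1 V list \<Rightarrow> 'a V" where
  "sumV xs = foldr addV xs zeroV"

definition expV :: "'a::field_char_0 V \<Rightarrow> 'a V" where
  "expV c = (let p2 = mulV c c; p3 = mulV p2 c; p4 = mulV p3 c; p5 = mulV p4 c; p6 = mulV p5 c; p7 = mulV p6 c in
     sumV [c, smulV (1/2) p2, smulV (1/6) p3, smulV (1/24) p4, smulV (1/120) p5, smulV (1/720) p6, smulV (1/5040) p7])"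

definition logV :: "'a::field_char_0 V \<Rightarrow> 'a V" where
  "logV c = (let p2 = mulV c c; p3 = mulV p2 c; p4 = mulV p3 c; p5 = mulV p4 c; p6 = mulV p5 c; p7 = mulV p6 c in
     sumV [c, smulV (-1/2) p2, smulV (1/3) p3, smulV (-1/4) p4, smulV (1/5) p5, smulV (-1/6) p6, smulV (1/7) p7])"

definition bchV :: "'a::field_char_0 V \<Rightarrow> 'a V \<Rightarrow> 'a V" where
  "bchV u v = (let eu = expV u; ev = expV v in logV (addV (addV eu ev) (mulV eu ev)))"

definition gcommV :: "'a::field_char_0 V \<Rightarrow> 'a V \<Rightarrow> 'a V" where
  "gcommV u v = bchV (bchV (bchV (smulV (-1) u) (smulV (-1) v)) u) v"

primrec giterV :: "'a::field_char_0 V \<Rightarrow> 'a V \<Rightarrow> nat \<Rightarrow> 'a V" where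
  "giterV u v 0 = u"
| "giterV u v (Suc k) = gcommV (giterV u v k) v"


section \<open>Quotient\<close>

lemma Iid_iff: "(p :: gen list \<Rightarrow> 'a::field_char_0) \<in> Iid \<longleftrightarrow> p \<in> FA \<and> crd p = zeroV"
  by (simp add: Iid_eq J0_def)

lemma cls_eq_set: "(p::gen list \<Rightarrow> 'a::field_char_0) \<in> FA \<Longrightarrow> cls p = {q \<in> FA. crd q = crd p}"
  unfolding cls_def by (auto simp: Iid_iff FA_psub crd_psub subV_eq0)

definition val :: "(gen list \<Rightarrow> 'a::field) set \<Rightarrow> 'a V" where
  "val X = crd (rep X)"

lemma rep_cls: assumes "(p::gen list \<Rightarrow> 'a::field_char_0) \<in> FA"
  shows "rep (cls p) \<in> FA \<and> crd (rep (cls p)) = crd p"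
proof -
  have "p \<in> cls p" using assms by (simp add: cls_eq_set)
  then have "rep (cls p) \<in> cls p" unfolding rep_def by (rule someI[where P="\<lambda>q. q \<in> cls p"])
  then show ?thesis using assms by (simp add: cls_eq_set)
qed

lemma val_cls: "(p::gen list \<Rightarrow> 'a::field_char_0) \<in> FA \<Longrightarrow> val (cls p) = crd p"
  unfolding val_def using rep_cls by blast

lemma crd_rep: "crd (rep X) = val X" by (simp add: val_def)

lemma cls_in: "p \<in> FA \<Longrightarrow> cls p \<in> Bset"
  by (simp add: Bset_def)

lemma rep_FA: "(X :: (gen list \<Rightarrow> 'a::field_char_0) set) \<in> Bset \<Longrightarrow> rep X \<in> FA"
  unfolding Bset_def using rep_cls by blast

lemma B_eq:
  assumes "(X :: (gen list \<Rightarrow> 'a::field_char_0) set) \<in> Bset" "Y \<in> Bset"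
  shows "X = Y \<longleftrightarrow> val X = val Y"
proof -
  obtain p where p: "p \<in> FA" "X = cls p" using assms(1) by (auto simp: Bset_def)
  obtain q where q: "q \<in> FA" "Y = cls q" using assms(2) by (auto simp: Bset_def)
  have "cls p = cls q \<longleftrightarrow> crd p = crd q"
  proof
    assume eq: "cls p = cls q"
    have "p \<in> cls p" using p(1) by (simp add: cls_eq_set)
    then have "p \<in> cls q" using eq by simp
    then show "crd p = crd q" using q(1) by (simp add: cls_eq_set)
  next
    assume "crd p = crd q"
    then show "cls p = cls q" using p(1) q(1) by (simp add: cls_eq_set)
  qed
  then show ?thesis using p q by (simp add: val_cls)
qed

lemma zeroB_in: "(zeroB :: (gen list \<Rightarrow> 'a::field_char_0) set) \<in> Bset"
  by (simp add: zeroB_def cls_in FA_pzero)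
lemma val_zeroB: "val (zeroB :: (gen list \<Rightarrow> 'a::field_char_0) set) = zeroV"
  by (simp add: zeroB_def val_cls FA_pzero crd_pzero)

lemma addB_B: "(X :: (gen list \<Rightarrow> 'a::field_char_0) set) \<in> Bset \<Longrightarrow> Y \<in> Bset \<Longrightarrow>
    addB X Y \<in> Bset \<and> val (addB X Y) = addV (val X) (val Y)"
  by (simp add: addB_def cls_in FA_padd rep_FA val_cls crd_padd crd_rep)
lemma subB_B: "(X :: (gen list \<Rightarrow> 'a::field_char_0) set) \<in> Bset \<Longrightarrow> Y \<in> Bset \<Longrightarrow>
    subB X Y \<in> Bset \<and> val (subB X Y) = subV (val X) (val Y)"
  by (simp add: subB_def cls_in FA_psub rep_FA val_cls crd_psub crd_rep)
lemma mulB_B: "(X :: (gen list \<Rightarrow> 'a::field_char_0) set) \<in> Bset \<Longrightarrow> Y \<in> Bset \<Longrightarrow>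
    mulB X Y \<in> Bset \<and> val (mulB X Y) = mulV (val X) (val Y)"
  by (simp add: mulB_def cls_in FA_pmul rep_FA val_cls crd_pmul crd_rep FA_nil)
lemma smulB_B: "(X :: (gen list \<Rightarrow> 'a::field_char_0) set) \<in> Bset \<Longrightarrow>
    smulB c X \<in> Bset \<and> val (smulB c X) = smulV c (val X)"
  by (simp add: smulB_def cls_in FA_psmul rep_FA val_cls crd_psmul crd_rep)
lemma negB_B: "(X :: (gen list \<Rightarrow> 'a::field_char_0) set) \<in> Bset \<Longrightarrow>
    negB X \<in> Bset \<and> val (negB X) = smulV (-1) (val X)"
  by (simp add: negB_def cls_in FA_psmul rep_FA val_cls crd_psmul crd_rep)

section \<open>Engel\<close>

lemma engel_all: "literV (c::'a::comm_ring_1 V) d 5 = zeroV"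
  using engelV by (cases c; cases d) auto

lemma liter_B: "(u :: (gen list \<Rightarrow> 'a::field_char_0) set) \<in> Bset \<Longrightarrow> v \<in> Bset \<Longrightarrow>
    liter u v k \<in> Bset \<and> val (liter u v k) = literV (val u) (val v) k"
  by (induction k) (simp_all add: lbr_def lbrV_def subB_B mulB_B)

lemma part1: "\<forall>u \<in> (Bset :: (gen list \<Rightarrow> 'a::field_char_0) set set). \<forall>v \<in> Bset. liter u v 5 = zeroB"
  using liter_B B_eq zeroB_in val_zeroB engel_all by metis

section \<open>Group part\<close>

lemma bpow_B: "(X :: (gen list \<Rightarrow> 'a::field_char_0) set) \<in> Bset \<Longrightarrow>
    bpow X n \<in> Bset \<and> val (bpow X n) = powV (val X) n"
  by (induction X n rule: bpow.induct) (simp_all add: zeroB_in val_zeroB mulB_B)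

lemma powV_8: "powV (c::'a::comm_ring_1 V) 8 = zeroV"
  by (cases c) (simp add: numeral_eq_Suc zeroV_def)

lemma powV_mono: "1 \<le> n \<Longrightarrow> powV c n = zeroV \<Longrightarrow> n \<le> k \<Longrightarrow> powV (c::'a::comm_ring_1 V) k = zeroV"
proof (induction k)
  case 0 then show ?case by simp
next
  case (Suc k)
  show ?case
  proof (cases "n \<le> k")
    case True
    then have "powV c k = zeroV" using Suc by simp
    moreover have "k \<ge> 1" using True Suc.prems(1) by simp
    then obtain m where "k = Suc m" by (cases k) auto
    ultimately show ?thesis by simp
  next
    case False
    then have "n = Suc k" using Suc.prems(3) by simp
    then show ?thesis using Suc.prems(2) by simp
  qed
qed

lemma sumB_B: "(\<forall>x\<in>set xs. (x :: (gen list \<Rightarrow> 'a::field_char_0) set) \<in> Bset) \<Longrightarrow>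
    sumB xs \<in> Bset \<and> val (sumB xs) = sumV (map val xs)"
  by (induction xs) (simp_all add: sumB_def sumV_def zeroB_in val_zeroB addB_B)

lemma foldr_zeros: "\<forall>y\<in>set ys. y = zeroV \<Longrightarrow> foldr addV ys (zeroV::'a::comm_ring_1 V) = zeroV"
  by (induction ys) auto

lemma nilsum_B:
  assumes X: "(X :: (gen list \<Rightarrow> 'a::field_char_0) set) \<in> Bset"
  shows "nilsum f X \<in> Bset \<and> val (nilsum f X) = sumV (map (\<lambda>k. smulV (f k) (powV (val X) k)) [1..<8])"
proof -
  define n0 where "n0 = nilidx X"
  have b8: "bpow X 8 = zeroB"
    using B_eq[OF conjunct1[OF bpow_B[OF X]] zeroB_in] bpow_B[OF X] val_zeroB powV_8 by metis
  have ex: "\<exists>n. n \<ge> 1 \<and> bpow X n = zeroB" using b8 by (intro exI[of _ 8]) simp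
  have n01: "n0 \<ge> 1 \<and> bpow X n0 = zeroB"
    unfolding n0_def nilidx_def using LeastI_ex[OF ex] .
  have n08: "n0 \<le> 8"
    unfolding n0_def nilidx_def using b8 by (intro Least_le) simp
  have pz: "powV (val X) n0 = zeroV"
    using n01 bpow_B[OF X, of n0] val_zeroB by metis
  have allB: "\<forall>x\<in>set (map (\<lambda>k. smulB (f k) (bpow X k)) [1..<n0]). x \<in> Bset"
    using bpow_B[OF X] smulB_B by auto
  have v1: "map val (map (\<lambda>k. smulB (f k) (bpow X k)) [1..<n0]) =
      map (\<lambda>k. smulV (f k) (powV (val X) k)) [1..<n0]"
    by (auto simp: smulB_B bpow_B[OF X])
  have split: "[1..<8] = [1..<n0] @ [n0..<8]"
    using n01 n08 upt_add_eq_append[of 1 n0 "8 - n0"] by simp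
  have zs: "\<forall>y\<in>set (map (\<lambda>k. smulV (f k) (powV (val X) k)) [n0..<8]). y = zeroV"
    using powV_mono[OF conjunct1[OF n01] pz] by auto
  have sumeq: "sumV (map (\<lambda>k. smulV (f k) (powV (val X) k)) [1..<8]) =
        sumV (map (\<lambda>k. smulV (f k) (powV (val X) k)) [1..<n0])"
    unfolding split sumV_def using foldr_zeros[OF zs] by simp
  have e1: "nilsum f X = sumB (map (\<lambda>k. smulB (f k) (bpow X k)) [1..<n0])"
    by (simp add: nilsum_def n0_def)
  show ?thesis
    using e1 sumB_B[OF allB] v1 sumeq by (simp only:)
qed

lemma smulV_one: "smulV 1 c = c" by (cases c) simp

lemma expV_eq: "sumV (map (\<lambda>k. smulV (1 / fact k) (powV c k)) [1..<8]) = expV (c::'a::field_char_0 V)"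
  by (simp add: expV_def sumV_def Let_def upt_rec numeral_eq_Suc smulV_one)

lemma logV_eq: "sumV (map (\<lambda>k. smulV ((-1) ^ (k + 1) / of_nat k) (powV c k)) [1..<8]) = logV (c::'a::field_char_0 V)"
  by (simp add: logV_def sumV_def Let_def upt_rec numeral_eq_Suc smulV_one)

lemma expm1B_B: "(X :: (gen list \<Rightarrow> 'a::field_char_0) set) \<in> Bset \<Longrightarrow>
    expm1B X \<in> Bset \<and> val (expm1B X) = expV (val X)"
  unfolding expm1B_def using nilsum_B expV_eq by metis
lemma log1pB_B: "(X :: (gen list \<Rightarrow> 'a::field_char_0) set) \<in> Bset \<Longrightarrow>
    log1pB X \<in> Bset \<and> val (log1pB X) = logV (val X)"
  unfolding log1pB_def using nilsum_B logV_eq by metis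

lemma bch_B: "(X :: (gen list \<Rightarrow> 'a::field_char_0) set) \<in> Bset \<Longrightarrow> Y \<in> Bset \<Longrightarrow>
    bch X Y \<in> Bset \<and> val (bch X Y) = bchV (val X) (val Y)"
  by (simp add: bch_def bchV_def Let_def log1pB_B expm1B_B addB_B mulB_B)

lemma giter_B: "(u :: (gen list \<Rightarrow> 'a::field_char_0) set) \<in> Bset \<Longrightarrow> v \<in> Bset \<Longrightarrow>
    giter u v k \<in> Bset \<and> val (giter u v k) = giterV (val u) (val v) k"
  by (induction k) (simp_all add: gcomm_def gcommV_def bch_B negB_B)

lemma gval: "giterV (V 1 0 0 0 0 0 0 0 0 0 0 0 0 0 0 0 0 0 0 0 0 0 0 0 0 0) ((V 0 1 0 0 0 0 0 0 0 0 0 0 0 0 0 0 0 0 0 0 0 0 0 0 0 0)::'a::field_char_0 V) 5 = (V 0 0 0 0 0 0 0 0 0 0 0 0 0 0 0 0 0 0 0 0 0 0 0 0 0 12)"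
  by (simp add: numeral_eq_Suc gcommV_def bchV_def expV_def logV_def sumV_def zeroV_def Let_def)

lemma part2: "\<not> (\<forall>u \<in> (Bset :: (gen list \<Rightarrow> 'a::field_char_0) set set). \<forall>v \<in> Bset. giter u v 5 = zeroB)"
proof
  assume H: "\<forall>u \<in> (Bset :: (gen list \<Rightarrow> 'a::field_char_0) set set). \<forall>v \<in> Bset. giter u v 5 = zeroB"
  define u :: "(gen list \<Rightarrow> 'a) set" where "u = cls (mon [gx])"
  define v :: "(gen list \<Rightarrow> 'a) set" where "v = cls (mon [gy])"
  have uB: "u \<in> Bset" and vB: "v \<in> Bset" by (simp_all add: u_def v_def cls_in FA_mon)
  have "val u = crd (mon [gx])" by (simp add: u_def val_cls FA_mon)
  then have vu: "val u = (V 1 0 0 0 0 0 0 0 0 0 0 0 0 0 0 0 0 0 0 0 0 0 0 0 0 0)" by (simp add: crd_def mon_def)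
  have "val v = crd (mon [gy])" by (simp add: v_def val_cls FA_mon)
  then have vv: "val v = (V 0 1 0 0 0 0 0 0 0 0 0 0 0 0 0 0 0 0 0 0 0 0 0 0 0 0)" by (simp add: crd_def mon_def)
  have "giter u v 5 = zeroB" using H uB vB by blast
  then have "val (giter u v 5) = zeroV" using val_zeroB by simp
  then have "giterV (V 1 0 0 0 0 0 0 0 0 0 0 0 0 0 0 0 0 0 0 0 0 0 0 0 0 0) (V 0 1 0 0 0 0 0 0 0 0 0 0 0 0 0 0 0 0 0 0 0 0 0 0 0 0) 5 = (zeroV :: 'a V)" using giter_B[OF uB vB] vu vv by simp
  then show False by (simp add: gval zeroV_def)
qed

theorem corollary1p4:
  shows "(\<forall>u \<in> (Bset :: (gen list \<Rightarrow> 'a::field_char_0) set set). \<forall>v \<in> Bset.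
            liter u v 5 = zeroB)
       \<and> \<not> (\<forall>u \<in> (Bset :: (gen list \<Rightarrow> 'a::field_char_0) set set). \<forall>v \<in> Bset.
            giter u v 5 = zeroB)"
  using part1 part2 by blast

end
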